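(* Let $x\in[0,1)$ be a $b$-imal number of depth $l$, and let $X$ be the string of length $l$ with $n(X)/b^l=x$. Let $j$ be the number of occurrences of $d$ in $X$. Let $l'\ge l$, and set $j'=j$ if $d>0$ and $j'=j+l'-l$ if $d=0$. Let $U$ be any subset of the open interval $(x,x+b^{-l'})$ and let $k\in\mathbb N$. Then: if $k<j'$, $\mu_k(U)=0$; if $k\ge j'$, $\mu_k(U)=b^{-l'}\mu_{k-j'}\big(b^{l'}U-b^{l'}x\big)$, where $b^{l'}U-b^{l'}x=\{b^{l'}(y-x):y\in U\}$.
   Context: Fix $b\ge2$ and $d\in\{0,\dots,b-1\}$; $\mathbb N=\{0,1,2,\dots\}$. A $b$-imal number is an element of $\bigcup_{l\ge0}b^{-l}\mathbb Z$; its depth is the smallest $l\ge0$ with $x\in b^{-l}\mathbb Z$. A string is a finite sequence $X=(d_l,\dots,d_1)$ of digits in $\{0,\dots,b-1\}$ (leading zeros allowed), of length $|X|=l\ge0$; its value is $n(X)=\sum_{i=1}^{l}d_ib^{i-1}$ ($0$ for the empty string). For $k\ge0$, $\mu_k=\sum_{X}b^{-|X|}\delta_{n(X)/b^{|X|}}$, the sum over all strings $X$ containing $d$ exactly $k$ times (masses at the same point add); it is a measure on $[0,1)$ of total mass $b$, defined on all subsets. *)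

theory Defs
  imports "HOL-Analysis.Analysis"
begin

text \<open>Strings are lists of digits, most significant digit first:
  the list [d_l, ..., d_1] has value sum d_i b^(i-1).\<close>

definition is_string :: "nat \<Rightarrow> nat list \<Rightarrow> bool" where
  "is_string b X \<longleftrightarrow> (\<forall>c\<in>set X. c < b)"

definition str_val :: "nat \<Rightarrow> nat list \<Rightarrow> nat" where
  "str_val b X = foldl (\<lambda>acc c. acc * b + c) 0 X"

definition is_bimal :: "nat \<Rightarrow> real \<Rightarrow> bool" where
  "is_bimal b x \<longleftrightarrow> (\<exists>l::nat. x * real b ^ l \<in> \<int>)"

definition bimal_depth :: "nat \<Rightarrow> real \<Rightarrow> nat" where
  "bimal_depth b x = (LEAST l::nat. x * real b ^ l \<in> \<int>)"

definition mu :: "nat \<Rightarrow> nat \<Rightarrow> nat \<Rightarrow> real set \<Rightarrow> ennreal" where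
  "mu b d k U = infsum (\<lambda>X. ennreal (1 / real b ^ length X))
     {X. is_string b X \<and> count_list X d = k \<and> real (str_val b X) / real b ^ length X \<in> U}"

end

theory Submission
  imports Defs
begin

lemma foldl_sv: fixes a b :: nat shows "foldl (\<lambda>acc c. acc * b + c) a B = a * b ^ length B + foldl (\<lambda>acc c. acc * b + c) 0 B"
proof (induction B arbitrary: a)
  case Nil then show ?case by simp
next
  case (Cons c B)
  have "foldl (\<lambda>acc c. acc * b + c) a (c # B) = foldl (\<lambda>acc c. acc * b + c) (a*b+c) B" by simp
  also have "\<dots> = (a*b+c) * b ^ length B + foldl (\<lambda>acc c. acc * b + c) 0 B" by (rule Cons.IH)
  also have "foldl (\<lambda>acc c. acc * b + c) 0 (c # B) = c * b ^ length B + foldl (\<lambda>acc c. acc * b + c) 0 B"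
    using Cons.IH[of c] by simp
  ultimately show ?case by (simp add: algebra_simps)
qed

lemma str_val_append: "str_val b (A @ B) = str_val b A * b ^ length B + str_val b B"
  unfolding str_val_def by (simp add: foldl_sv[of b "foldl _ 0 A" B])

lemma str_val_snoc: "str_val b (A @ [c]) = str_val b A * b + c"
  by (simp add: str_val_append str_val_def)

lemma str_val_rep0: "str_val b (replicate n 0) = 0"
proof (induction n)
  case 0 then show ?case by (simp add: str_val_def)
next
  case (Suc n)
  have "replicate (Suc n) (0::nat) = [0] @ replicate n 0" by simp
  then show ?case using Suc by (simp only: str_val_append) (simp add: str_val_def)
qed

lemma count_rep: "count_list (replicate n a) a = n"
  by (induction n) auto

lemma str_val_less: "is_string b X \<Longrightarrow> str_val b X < b ^ length X"
proof (induction X rule: rev_induct)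
  case Nil then show ?case by (simp add: str_val_def)
next
  case (snoc c X)
  then have h: "str_val b X + 1 \<le> b ^ length X" "c < b" by (auto simp: is_string_def)
  have "str_val b X * b + c < (str_val b X + 1) * b" using h by simp
  also have "\<dots> \<le> b ^ length X * b" using mult_le_mono1[OF h(1)] by simp
  finally show ?case by (simp add: str_val_snoc mult.commute)
qed

lemma str_val_inj: "is_string b A \<Longrightarrow> is_string b B \<Longrightarrow> length A = length B \<Longrightarrow> str_val b A = str_val b B \<Longrightarrow> A = B"
proof (induction A arbitrary: B rule: rev_induct)
  case Nil then show ?case by simp
next
  case (snoc c A)
  then obtain B' c' where B: "B = B' @ [c']" by (metis length_0_conv rev_exhaust snoc_eq_iff_butlast)
  have cs: "c < b" "c' < b" "is_string b A" "is_string b B'" using snoc.prems B by (auto simp: is_string_def)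
  have e: "str_val b A * b + c = str_val b B' * b + c'" using snoc.prems B by (simp add: str_val_snoc)
  then have "(str_val b A * b + c) mod b = (str_val b B' * b + c') mod b" by simp
  then have "c = c'" using cs by simp
  with e have "str_val b A * b = str_val b B' * b" by simp
  then have "str_val b A = str_val b B'" using cs by simp
  then have "A = B'" using snoc.IH cs snoc.prems B by simp
  then show ?case using B \<open>c = c'\<close> by simp
qed

lemma infsum_cmult_ennreal:
  fixes g :: "'a \<Rightarrow> ennreal"
  assumes "c < top"
  shows "infsum (\<lambda>z. c * g z) A = c * infsum g A"
proof -
  have "(g has_sum infsum g A) A" 
    apply (rule has_sum_infsum) apply (rule nonneg_summable_on_complete) by simp
  then have "((\<lambda>F. sum g F) \<longlongrightarrow> infsum g A) (finite_subsets_at_top A)"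
    by (simp add: has_sum_def)
  then have "((\<lambda>F. c * sum g F) \<longlongrightarrow> c * infsum g A) (finite_subsets_at_top A)"
    by (rule ennreal_tendsto_cmult[OF assms])
  then have "((\<lambda>z. c * g z) has_sum (c * infsum g A)) A"
    by (simp add: has_sum_def sum_distrib_left)
  then show ?thesis by (rule infsumI)
qed

theorem mainTheorem12:
  fixes b d l l' k :: nat and x :: real and X :: "nat list" and U :: "real set"
  assumes "b \<ge> 2" and "d < b"
    and "0 \<le> x" and "x < 1"
    and "is_bimal b x" and "bimal_depth b x = l"
    and "is_string b X" and "length X = l" and "real (str_val b X) / real b ^ l = x"
    and "l' \<ge> l"
    and "U \<subseteq> {x <..< x + 1 / real b ^ l'}"
  shows "let j = count_list X d; j' = (if d > 0 then j else j + l' - l) in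
    (k < j' \<longrightarrow> mu b d k U = 0) \<and>
    (k \<ge> j' \<longrightarrow> mu b d k U =
       ennreal (1 / real b ^ l') * mu b d (k - j') ((\<lambda>y. real b ^ l' * (y - x)) ` U))"
proof -
  define j where "j = count_list X d"
  define j' where "j' = (if d > 0 then j else j + l' - l)"
  define P where "P = X @ replicate (l' - l) 0"
  define N where "N = str_val b P"
  define V where "V = (\<lambda>y. real b ^ l' * (y - x)) ` U"
  have b0: "real b > 0" using assms(1) by simp
  have lenP: "length P = l'" using assms(8,10) by (simp add: P_def)
  have strP: "is_string b P" using assms(1,7) by (auto simp: P_def is_string_def)
  have NX: "N = str_val b X * b ^ (l' - l)"
    unfolding N_def P_def str_val_append by (simp add: str_val_rep0)
  have xN: "x = real N / real b ^ l'"
  proof -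
    have "real b ^ l' = real b ^ l * real b ^ (l' - l)" using assms(10) by (simp add: power_add[symmetric])
    then show ?thesis using assms(9) b0 by (simp add: NX)
  qed
  have cnt: "count_list (P @ Z) d = j' + count_list Z d" for Z
    using assms(10) by (auto simp: P_def j'_def j_def count_list_0_iff count_rep)
  have val: "real (str_val b (P @ Z)) / real b ^ length (P @ Z)
      = x + real (str_val b Z) / real b ^ length Z / real b ^ l'" for Z
  proof -
    have "real (str_val b (P @ Z)) = real N * real b ^ length Z + real (str_val b Z)"
      by (simp add: str_val_append N_def)
    moreover have "real b ^ length (P @ Z) = real b ^ l' * real b ^ length Z"
      using lenP by (simp add: power_add)
    ultimately show ?thesis using b0 by (simp add: xN field_simps)
  qed
  have decomp: "\<exists>Z. Y = P @ Z \<and> is_string b Z"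
    if Ys: "is_string b Y" and Yv: "real (str_val b Y) / real b ^ length Y \<in> U" for Y
  proof -
    define v where "v = str_val b Y"
    define m where "m = length Y"
    have lo: "x < real v / real b ^ m" and hi: "real v / real b ^ m < x + 1 / real b ^ l'"
      using Yv assms(11) by (auto simp: v_def m_def)
    have pm: "real b ^ m > 0" "real b ^ l' > 0" using b0 by auto
    have lo': "real N * real b ^ m < real v * real b ^ l'"
      using lo pm by (simp add: xN field_simps)
    have hi': "real v * real b ^ l' < (real N + 1) * real b ^ m"
    proof -
      have h1: "real v / real b ^ m < (real N + 1) / real b ^ l'" using hi by (simp add: xN add_divide_distrib)
      have "real v < (real N + 1) / real b ^ l' * real b ^ m" using h1 pm(1) by (simp add: pos_divide_less_eq)
      then have "real v < ((real N + 1) * real b ^ m) / real b ^ l'" by simp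
      then show ?thesis using pm(2) by (simp add: pos_less_divide_eq)
    qed
    have "real (N * b ^ m) < real (v * b ^ l')" using lo' by simp
    then have lo2: "N * b ^ m < v * b ^ l'" by (simp only: of_nat_less_iff)
    have "real (v * b ^ l') < real ((N + 1) * b ^ m)" using hi' by (simp add: algebra_simps)
    then have hi2: "v * b ^ l' < (N + 1) * b ^ m" by (simp only: of_nat_less_iff)
    have bpos: "b ^ n > 0" for n using assms(1) by simp
    show ?thesis
    proof (cases "m \<le> l'")
      case True
      have e: "b ^ l' = b ^ m * b ^ (l' - m)" using True by (simp add: power_add[symmetric])
      from lo2 have "N * b ^ m < (v * b ^ (l' - m)) * b ^ m" by (simp add: e algebra_simps)
      then have "N < v * b ^ (l' - m)" using bpos by simp
      moreover from hi2 have "(v * b ^ (l' - m)) * b ^ m < (N+1) * b ^ m" by (simp add: e algebra_simps)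
      then have "v * b ^ (l' - m) < N + 1" by (metis mult_less_cancel2)
      ultimately show ?thesis by simp
    next
      case False
      define r where "r = m - l'"
      define A where "A = take l' Y"
      define Z where "Z = drop l' Y"
      have YAZ: "Y = A @ Z" by (simp add: A_def Z_def)
      have lA: "length A = l'" "length Z = r" using False by (auto simp: A_def Z_def r_def m_def)
      have sAZ: "is_string b A" "is_string b Z" using Ys YAZ by (auto simp: is_string_def)
      have e: "b ^ m = b ^ l' * b ^ r" using False by (simp add: r_def power_add[symmetric])
      have vv: "v = str_val b A * b ^ r + str_val b Z" using YAZ lA by (simp add: v_def str_val_append)
      have zl: "str_val b Z < b ^ r" using str_val_less[OF sAZ(2)] lA by simp
      from lo2 have "(N * b ^ r) * b ^ l' < v * b ^ l'" by (simp add: e algebra_simps)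
      then have l3: "N * b ^ r < v" using bpos by simp
      from hi2 have "v * b ^ l' < ((N+1) * b ^ r) * b ^ l'" by (simp add: e algebra_simps)
      then have h3: "v < (N+1) * b ^ r" by (metis mult_less_cancel2)
      have "N * b ^ r < (str_val b A + 1) * b ^ r" using l3 vv zl by (simp add: algebra_simps)
      then have "N < str_val b A + 1" by (metis mult_less_cancel2)
      moreover have "str_val b A * b ^ r < (N+1) * b ^ r" using h3 vv by simp
      then have "str_val b A < N + 1" by (metis mult_less_cancel2)
      ultimately have "str_val b A = N" by simp
      then have "A = P" using str_val_inj[OF sAZ(1) strP] lA lenP by (simp add: N_def)
      then show ?thesis using YAZ sAZ by blast
    qed
  qed
  define S where "S = {Y. is_string b Y \<and> count_list Y d = k \<and> real (str_val b Y) / real b ^ length Y \<in> U}"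
  define f where "f = (\<lambda>Y::nat list. ennreal (1 / real b ^ length Y))"
  have muU: "mu b d k U = infsum f S" by (simp add: mu_def S_def f_def)
  show ?thesis
    unfolding Let_def j_def[symmetric] j'_def[symmetric] V_def[symmetric]
  proof (intro conjI impI)
    assume "k < j'"
    have "S = {}"
    proof (rule ccontr)
      assume "S \<noteq> {}"
      then obtain Y where "Y \<in> S" by blast
      then obtain Z where "Y = P @ Z" using decomp by (auto simp: S_def)
      with \<open>Y \<in> S\<close> cnt[of Z] \<open>k < j'\<close> show False by (simp add: S_def)
    qed
    then show "mu b d k U = 0" by (simp add: muU)
  next
    assume kj: "j' \<le> k"
    define T where "T = {Z. is_string b Z \<and> count_list Z d = k - j' \<and> real (str_val b Z) / real b ^ length Z \<in> V}"
    have ST: "S = (\<lambda>Z. P @ Z) ` T"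
    proof
      show "S \<subseteq> (\<lambda>Z. P @ Z) ` T"
      proof
        fix Y assume Y: "Y \<in> S"
        then obtain Z where Z: "Y = P @ Z" "is_string b Z" using decomp by (auto simp: S_def)
        have "count_list Z d = k - j'" using Y Z cnt[of Z] by (simp add: S_def)
        moreover have "real (str_val b Z) / real b ^ length Z \<in> V"
        proof -
          have u: "x + real (str_val b Z) / real b ^ length Z / real b ^ l' \<in> U"
            using Y Z val[of Z] by (simp add: S_def)
          have "real (str_val b Z) / real b ^ length Z = real b ^ l' * ((x + real (str_val b Z) / real b ^ length Z / real b ^ l') - x)"
            using b0 by simp
          then show ?thesis unfolding V_def using u by blast
        qed
        ultimately show "Y \<in> (\<lambda>Z. P @ Z) ` T" using Z by (auto simp: T_def)
      qed
    next
      show "(\<lambda>Z. P @ Z) ` T \<subseteq> S"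
      proof
        fix Y assume "Y \<in> (\<lambda>Z. P @ Z) ` T"
        then obtain Z where Z: "Y = P @ Z" "Z \<in> T" by blast
        then obtain u where u: "u \<in> U" "real (str_val b Z) / real b ^ length Z = real b ^ l' * (u - x)"
          by (auto simp: T_def V_def)
        have "x + real (str_val b Z) / real b ^ length Z / real b ^ l' = u" using u(2) b0 by simp
        then have "real (str_val b Y) / real b ^ length Y \<in> U" using val[of Z] Z(1) u(1) by simp
        moreover have "is_string b Y" using Z strP by (auto simp: T_def is_string_def)
        moreover have "count_list Y d = k" using Z cnt[of Z] kj by (simp add: T_def)
        ultimately show "Y \<in> S" by (simp add: S_def)
      qed
    qed
    have "infsum f S = infsum (f \<circ> (\<lambda>Z. P @ Z)) T"
      unfolding ST by (rule infsum_reindex) (simp add: inj_on_def)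
    also have "\<dots> = infsum (\<lambda>Z. ennreal (1 / real b ^ l') * ennreal (1 / real b ^ length Z)) T"
    proof (rule infsum_cong)
      fix Z
      have "1 / real b ^ length (P @ Z) = (1 / real b ^ l') * (1 / real b ^ length Z)"
        using lenP by (simp add: power_add)
      then show "(f \<circ> (\<lambda>Z. P @ Z)) Z = ennreal (1 / real b ^ l') * ennreal (1 / real b ^ length Z)"
        using b0 by (simp add: f_def ennreal_mult[symmetric])
    qed
    also have "\<dots> = ennreal (1 / real b ^ l') * infsum (\<lambda>Z. ennreal (1 / real b ^ length Z)) T"
      by (rule infsum_cmult_ennreal[where c="ennreal (1 / real b ^ l')" and g="\<lambda>Z. ennreal (1 / real b ^ length Z)"]) (simp only: ennreal_less_top)
    also have "infsum (\<lambda>Z. ennreal (1 / real b ^ length Z)) T = mu b d (k - j') V"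
      by (simp add: mu_def T_def)
    finally show "mu b d k U = ennreal (1 / real b ^ l') * mu b d (k - j') V" using muU by simp
  qed
qed

end
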